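(* Let the polynomials $\nu_r(x)$ be defined by $\nu_0 = 1$, $\nu_1 = 0$ and $\nu_r(x) = x \sum_{j=0}^{r-2} \binom{r-1}{j} \nu_j(x)$ for $r\ge2$. Then for every integer $m\ge1$ and every real $x \geq 0$, \[ \nu_{2m}(x) \leq m \max\left( e^{m-1} (mx)^m,\ m^{2m-1} x\right). \] *)

theory Defs
  imports Complex_Main "HOL-Computational_Algebra.Polynomial"
begin

function nu :: "nat \<Rightarrow> real poly" where
  "nu 0 = 1"
| "nu (Suc 0) = 0"
| "nu (Suc (Suc n)) = [:0, 1:] * (\<Sum>j\<le>n. of_nat ((Suc n) choose j) * nu j)"
  by pat_completeness auto
termination by (relation "measure id") auto

end

theory Submission
  imports Defs
begin

lemma coeff_nu_SS0: "coeff (nu (Suc (Suc n))) 0 = 0"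
  by simp

lemma coeff_nu_SS: "coeff (nu (Suc (Suc n))) (Suc k) =
   (\<Sum>j\<le>n. real (Suc n choose j) * coeff (nu j) k)"
  by (simp add: coeff_sum of_nat_poly)

definition B :: "nat \<Rightarrow> nat \<Rightarrow> real" where
  "B r k = (if 2 * k \<le> r then real k ^ r / fact k else 0)"

lemma fact_step: "(real k' + 1) ^ Suc n / fact k' = real (Suc k') ^ Suc (Suc n) / fact (Suc k')"
proof -
  have f: "fact (Suc k') = (1 + real k') * (fact k' :: real)" by (simp add: algebra_simps)
  have "real (Suc k') ^ Suc (Suc n) / fact (Suc k') = ((1 + real k') * (1 + real k') ^ Suc n) / ((1 + real k') * fact k')"
    unfolding f of_nat_Suc by (subst power_Suc) (rule refl)
  also have "\<dots> = (1 + real k') ^ Suc n / fact k'"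
    by (rule nonzero_mult_divide_mult_cancel_left) simp
  finally show ?thesis by (simp add: add.commute)
qed

lemma B_le: "B r k \<le> real k ^ r / fact k"
  by (simp add: B_def)

lemma coeff_nu_bound: "0 \<le> coeff (nu r) k \<and> coeff (nu r) k \<le> B r k"
proof (induction r arbitrary: k rule: less_induct)
  case (less r)
  show ?case
  proof (cases r)
    case 0
    then show ?thesis by (cases k) (auto simp: B_def)
  next
    case (Suc r')
    show ?thesis
    proof (cases r')
      case 0
      then show ?thesis using Suc by (auto simp: B_def)
    next
      case (Suc n)
      note rr = \<open>r = Suc r'\<close> Suc
      show ?thesis
      proof (cases k)
        case 0
        then show ?thesis using rr by (simp add: B_def)
      next
        case (Suc k')
        have IH: "\<And>j. j \<le> n \<Longrightarrow> 0 \<le> coeff (nu j) k' \<and> coeff (nu j) k' \<le> B j k'"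
          using less rr by auto
        have eq: "coeff (nu r) k = (\<Sum>j\<le>n. real (Suc n choose j) * coeff (nu j) k')"
          using rr Suc coeff_nu_SS by simp
        have nonneg: "0 \<le> coeff (nu r) k"
          unfolding eq using IH by (intro sum_nonneg) auto
        show ?thesis
        proof (cases "2 * k' \<le> n")
          case True
          have "coeff (nu r) k \<le> (\<Sum>j\<le>n. real (Suc n choose j) * (real k' ^ j / fact k'))"
            unfolding eq using IH B_le by (intro sum_mono mult_left_mono) (auto intro: order_trans)
          also have "\<dots> \<le> (\<Sum>j\<le>Suc n. real (Suc n choose j) * (real k' ^ j / fact k'))"
            by (intro sum_mono2) auto
          also have "\<dots> = (\<Sum>j\<le>Suc n. real (Suc n choose j) * real k' ^ j * 1 ^ (Suc n - j)) / fact k'"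
            by (subst sum_divide_distrib) simp
          also have "\<dots> = (real k' + 1) ^ Suc n / fact k'"
            unfolding binomial_ring[of "real k'" 1] by simp
          also have "\<dots> = real k ^ r / fact k"
            using rr Suc fact_step by simp
          finally show ?thesis using nonneg True rr Suc by (simp add: B_def)
        next
          case False
          have "\<And>j. j \<le> n \<Longrightarrow> coeff (nu j) k' = 0"
            using IH False by (fastforce simp: B_def)
          then have "coeff (nu r) k = 0" unfolding eq by simp
          then show ?thesis using False rr Suc by (simp add: B_def)
        qed
      qed
    qed
  qed
qed

lemma pow_fact: "real k ^ k \<le> fact k * exp (real k - 1)" if "k \<ge> 1" for k :: nat
  using that
proof (induction k rule: dec_induct)
  case base
  then show ?case by simp
next
  case (step k)
  have kp: "real k > 0" using step by simp
  have "(1 + 1 / real k) ^ k \<le> exp (1 / real k) ^ k"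
    by (intro power_mono) (use exp_ge_add_one_self[of "1 / real k"] kp in auto)
  also have "\<dots> = exp 1" using kp by (simp add: exp_of_nat_mult[symmetric])
  finally have h: "(1 + 1 / real k) ^ k \<le> exp 1" .
  have "real (Suc k) ^ k = real k ^ k * (1 + 1 / real k) ^ k"
    using kp by (simp add: power_mult_distrib[symmetric] field_simps)
  also have "\<dots> \<le> real k ^ k * exp 1"
    by (intro mult_left_mono h) simp
  also have "\<dots> \<le> fact k * exp (real k - 1) * exp 1"
    by (intro mult_right_mono step.IH) simp
  also have "\<dots> = fact k * exp (real (Suc k) - 1)"
    by (simp add: mult.assoc exp_add[symmetric])
  finally have "real (Suc k) ^ k \<le> fact k * exp (real (Suc k) - 1)" .
  then have "real (Suc k) * real (Suc k) ^ k \<le> real (Suc k) * (fact k * exp (real (Suc k) - 1))"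
    by (intro mult_left_mono) auto
  then show ?case by (simp add: algebra_simps)
qed

lemma term_bound:
  fixes x :: real
  assumes "1 \<le> k" "k \<le> m" "x \<ge> 0"
  shows "real k ^ (2*m) / fact k * x ^ k
      \<le> max (exp (real m - 1) * (real m * x) ^ m) (real m ^ (2 * m - 1) * x)"
proof -
  have mp: "real m > 0" using assms by simp
  have "real k ^ (2*m) = real k ^ k * real k ^ (2*m - k)"
    using assms by (simp add: power_add[symmetric])
  also have "\<dots> \<le> fact k * exp (real k - 1) * real m ^ (2*m - k)"
    using assms pow_fact[of k] by (intro mult_mono power_mono) auto
  finally have "real k ^ (2*m) / fact k \<le> exp (real k - 1) * real m ^ (2*m - k)"
    by (simp add: divide_le_eq mult.commute mult.left_commute)
  then have "real k ^ (2*m) / fact k * x ^ k \<le> exp (real k - 1) * real m ^ (2*m - k) * x ^ k"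
    using assms by (intro mult_right_mono) auto
  also define t where "t = exp 1 * x / real m"
  have t0: "t \<ge> 0" using assms mp by (simp add: t_def)
  have gen: "exp (real i) * real m ^ (2*m - 1 - i) * x ^ (Suc i) = real m ^ (2*m-1) * x * t ^ i"
    if "i \<le> m - 1" for i
  proof -
    have "real m ^ (2*m-1) = real m ^ (2*m - 1 - i) * real m ^ i"
      using that assms by (simp add: power_add[symmetric])
    moreover have "exp (real i) = exp 1 ^ i" by (simp add: exp_of_nat_mult[symmetric])
    ultimately show ?thesis using mp unfolding t_def
      by (simp add: power_divide power_mult_distrib field_simps)
  qed
  have "exp (real k - 1) * real m ^ (2*m - k) * x ^ k = real m ^ (2*m-1) * x * t ^ (k-1)"
    using gen[of "k-1"] assms by (simp add: of_nat_diff)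
  also have "\<dots> \<le> real m ^ (2*m-1) * x * max (t ^ (m-1)) 1"
  proof (intro mult_left_mono)
    show "t ^ (k-1) \<le> max (t ^ (m-1)) 1"
    proof (cases "t \<le> 1")
      case True then show ?thesis using t0 by (simp add: power_le_one le_max_iff_disj)
    next
      case False then show ?thesis using assms
        by (simp add: le_max_iff_disj power_increasing)
    qed
  qed (use assms in simp)
  also have "\<dots> = max (real m ^ (2*m-1) * x * t ^ (m-1)) (real m ^ (2*m-1) * x)"
    using assms by (simp add: max_mult_distrib_left)
  also have "real m ^ (2*m-1) * x * t ^ (m-1) = exp (real m - 1) * (real m * x) ^ m"
  proof -
    have "real m ^ (2*m-1) * x * t ^ (m-1) = exp (real (m-1)) * real m ^ (2*m - 1 - (m-1)) * x ^ Suc (m-1)"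
      by (rule sym, rule gen) simp
    also have "\<dots> = exp (real m - 1) * (real m * x) ^ m"
      using assms by (simp add: of_nat_diff power_mult_distrib mult_2)
    finally show ?thesis .
  qed
  finally show ?thesis by simp
qed

theorem proposition20:
  fixes m :: nat and x :: real
  assumes "m \<ge> 1" and "x \<ge> 0"
  shows "poly (nu (2 * m)) x
           \<le> real m * max (exp (real m - 1) * (real m * x) ^ m) (real m ^ (2 * m - 1) * x)"
proof -
  let ?M = "max (exp (real m - 1) * (real m * x) ^ m) (real m ^ (2 * m - 1) * x)"
  have z: "coeff (nu (2*m)) i = 0" if "i > m" for i
    using coeff_nu_bound[of "2*m" i] that by (simp add: B_def)
  have deg: "degree (nu (2*m)) \<le> m" by (rule degree_le) (use z in auto)
  have "poly (nu (2 * m)) x = (\<Sum>i\<le>degree (nu (2*m)). coeff (nu (2*m)) i * x ^ i)"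
    by (rule poly_altdef)
  also have "\<dots> = (\<Sum>i\<le>m. coeff (nu (2*m)) i * x ^ i)"
    using deg z by (intro sum.mono_neutral_left) (auto intro: le_degree)
  also have "\<dots> = (\<Sum>i\<in>{1..m}. coeff (nu (2*m)) i * x ^ i)"
  proof -
    have "coeff (nu (2*m)) 0 = 0" using coeff_nu_bound[of "2*m" 0] assms by (auto simp: B_def power_0_left)
    then show ?thesis by (intro sum.mono_neutral_right) (auto simp: Suc_le_eq)
  qed
  also have "\<dots> \<le> (\<Sum>i\<in>{1..m}. ?M)"
  proof (intro sum_mono)
    fix i assume i: "i \<in> {1..m}"
    have "coeff (nu (2*m)) i * x ^ i \<le> real i ^ (2*m) / fact i * x ^ i"
      using coeff_nu_bound[of "2*m" i] B_le[of "2*m" i] assms by (intro mult_right_mono) auto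
    also have "\<dots> \<le> ?M" using term_bound[of i m x] i assms by auto
    finally show "coeff (nu (2*m)) i * x ^ i \<le> ?M" .
  qed
  also have "\<dots> = real m * ?M" by simp
  finally show ?thesis .
qed

end
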